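(* For every $x\in\mathbb T^3\setminus\mathfrak I$, the Lebesgue measure of $\mathcal S(x)$ is strictly positive.
   Context: $\mathbb{T}^3=\mathbb{R}^3/\mathbb{Z}^3$; $\omega(k)=\omega_0+\sum_{j=1}^3 2(1-\cos(2\pi k^j))$ with fixed $2<\omega_0<3$. Two wave vectors $x,y\in\mathbb{T}^3$ are connected by one collision if $\omega(y)=\omega(x)+\omega(y-x)$, or $\omega(x)=\omega(y)+\omega(x-y)$, or $\omega(x+y)=\omega(x)+\omega(y)$. The no-collision region $\mathfrak I$ is the set of $x\in\mathbb T^3$ such that no $y\in\mathbb T^3$ is connected to $x$ by one collision. For $x\in\mathbb T^3\setminus\mathfrak I$: $\mathcal S^1(x)$ is the set of $y$ connected to $x$ by one collision, $\mathcal S^n(x)=\bigcup_{z\in\mathcal S^{n-1}(x)}\mathcal S^1(z)$ for $n\ge2$, and $\mathcal S(x)=\bigcup_{n\ge1}\mathcal S^n(x)$. *)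

theory Defs
  imports "HOL-Analysis.Analysis"
begin

text \<open>The torus T^3 = R^3/Z^3 is represented by its fundamental domain [0,1)^3 in real^3,
  with group operations taken componentwise modulo 1 (via frac).\<close>

definition torus3 :: "(real^3) set" where
  "torus3 = {x. \<forall>i. 0 \<le> x$i \<and> x$i < 1}"

definition tadd :: "real^3 \<Rightarrow> real^3 \<Rightarrow> real^3" where
  "tadd x y = (\<chi> i. frac (x$i + y$i))"

definition tsub :: "real^3 \<Rightarrow> real^3 \<Rightarrow> real^3" where
  "tsub x y = (\<chi> i. frac (x$i - y$i))"

definition disp :: "real \<Rightarrow> real^3 \<Rightarrow> real" where
  "disp \<omega>0 k = \<omega>0 + (\<Sum>j\<in>UNIV. 2 * (1 - cos (2 * pi * k$j)))"

definition collides :: "real \<Rightarrow> real^3 \<Rightarrow> real^3 \<Rightarrow> bool" where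
  "collides \<omega>0 x y \<longleftrightarrow>
     disp \<omega>0 y = disp \<omega>0 x + disp \<omega>0 (tsub y x) \<or>
     disp \<omega>0 x = disp \<omega>0 y + disp \<omega>0 (tsub x y) \<or>
     disp \<omega>0 (tadd x y) = disp \<omega>0 x + disp \<omega>0 y"

definition nocoll :: "real \<Rightarrow> (real^3) set" where
  "nocoll \<omega>0 = {x \<in> torus3. \<not> (\<exists>y\<in>torus3. collides \<omega>0 x y)}"

text \<open>S^1(x), S^n(x) (for n \<ge> 1; index n here means S^n), and S(x).\<close>
definition S1 :: "real \<Rightarrow> real^3 \<Rightarrow> (real^3) set" where
  "S1 \<omega>0 x = {y \<in> torus3. collides \<omega>0 x y}"

fun Sn :: "real \<Rightarrow> nat \<Rightarrow> real^3 \<Rightarrow> (real^3) set" where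
  "Sn \<omega>0 0 x = {}"
| "Sn \<omega>0 (Suc 0) x = S1 \<omega>0 x"
| "Sn \<omega>0 (Suc (Suc n)) x = (\<Union>z\<in>Sn \<omega>0 (Suc n) x. S1 \<omega>0 z)"

definition Sall :: "real \<Rightarrow> real^3 \<Rightarrow> (real^3) set" where
  "Sall \<omega>0 x = (\<Union>n\<in>{1..}. Sn \<omega>0 n x)"

end

theory Submission
  imports Defs
begin


definition dc :: "real \<Rightarrow> real \<Rightarrow> real" where
  "dc s t = cos (2*pi* s) + cos (2*pi* t) - cos (2*pi*(s+t)) - 1"

definition psi :: "real \<Rightarrow> real" where
  "psi s = cos (2*pi* s) - 1 + 2 * sin (pi* s)"

lemma cos_shift_int: "cos (2*pi*(x + of_int n)) = cos (2*pi*x)"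
proof -
  have "2*pi*(x + of_int n) = 2*pi*x + (2 * pi) * of_int n" by (simp add: algebra_simps)
  then show ?thesis by (simp add: cos_add)
qed

lemma disp_per:
  assumes "\<And>i. \<exists>n::int. u$i = v$i + of_int n"
  shows "disp w u = disp w v"
  unfolding disp_def
proof (intro arg_cong[where f="\<lambda>s. w + s"] sum.cong refl)
  fix j :: 3
  obtain n :: int where "u$j = v$j + of_int n" using assms by blast
  then show "2 * (1 - cos (2 * pi * u $ j)) = 2 * (1 - cos (2 * pi * v $ j))"
    by (simp add: cos_shift_int)
qed

lemma disp_tadd: "disp w (tadd p q) = disp w (p + q)"
  by (rule disp_per) (auto simp: tadd_def frac_def intro!: exI[where x="- floor (p$i + q$i)" for i])

lemma disp_tsub: "disp w (tsub p q) = disp w (p - q)"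
  by (rule disp_per) (auto simp: tsub_def frac_def intro!: exI[where x="- floor (p$i - q$i)" for i])

definition fracv :: "real^3 \<Rightarrow> real^3" where
  "fracv v = (\<chi> i. frac (v$i))"

lemma disp_fracv: "disp w (fracv v) = disp w v"
  by (rule disp_per) (auto simp: fracv_def frac_def intro!: exI[where x="- floor (v$i)" for i])

lemma fracv_torus: "fracv v \<in> torus3"
  by (auto simp: fracv_def torus3_def frac_lt_1)

lemma disp_E: "disp w (p + q) - disp w p - disp w q
   = - w + 2 * (dc (p$1) (q$1) + dc (p$2) (q$2) + dc (p$3) (q$3))"
  unfolding disp_def dc_def by (simp add: sum_3 algebra_simps)

lemma dc_alt: "dc s t = cos (2*pi* s) - 1 + 2 * sin (pi* s) * sin (2*pi* t + pi* s)"
proof -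
  have "2 * sin (pi* s) * sin (2*pi* t + pi* s) = cos (2*pi* t) - cos (2*pi*(s+t))"
    by (simp add: sin_times_sin algebra_simps add_divide_distrib diff_divide_distrib)
  then show ?thesis by (simp add: dc_def)
qed

lemma dc_sym: "dc s t = dc t s"
  by (simp add: dc_def add.commute)

lemma psi_alt: "psi s = 2 * sin (pi* s) - 2 * (sin (pi* s))^2"
proof -
  have "cos (2*pi* s) = 1 - 2 * (sin (pi* s))^2"
    using cos_double_sin[of "pi* s"] by (simp add: mult.assoc)
  then show ?thesis by (simp add: psi_def)
qed

lemma psi_le: "psi s \<le> 1/2"
proof -
  have "2 * x - 2 * x^2 \<le> 1/2" for x :: real
    using sum_squares_ge_zero[of "x - 1/2" 0] by (simp add: power2_eq_square algebra_simps)
  then show ?thesis by (simp add: psi_alt)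
qed

lemma dc_le_psi: assumes "sin (pi* s) \<ge> 0" shows "dc s t \<le> psi s"
proof -
  have "sin (pi* s) * sin (2*pi* t + pi* s) \<le> sin (pi* s) * 1"
    by (rule mult_left_mono) (use assms in auto)
  then show ?thesis by (simp add: dc_alt psi_def)
qed



definition EE :: "real \<Rightarrow> real^3 \<Rightarrow> real^3 \<Rightarrow> real" where
  "EE w p q = disp w (p + q) - disp w p - disp w q"

lemma collides_alt: "collides w x y \<longleftrightarrow>
   disp w y = disp w x + disp w (y - x) \<or> disp w x = disp w y + disp w (x - y) \<or>
   disp w (x + y) = disp w x + disp w y"
  by (simp add: collides_def disp_tadd disp_tsub)

lemma disp_even: "disp w (- v) = disp w v"
  by (simp add: disp_def)

lemma collides_sym: "collides w x y \<Longrightarrow> collides w y x"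
  unfolding collides_alt by (metis add.commute)

lemma EE_coll: "EE w p q = 0 \<Longrightarrow> collides w p q"
  unfolding collides_alt EE_def by simp

lemma Sn_step: "p \<in> Sn w (Suc n) x \<Longrightarrow> q \<in> S1 w p \<Longrightarrow> q \<in> Sn w (Suc (Suc n)) x"
  by auto

lemma Sall_step:
  assumes "p \<in> Sall w x" "q \<in> torus3" "collides w p q"
  shows "q \<in> Sall w x"
proof -
  obtain n where n: "n \<ge> 1" "p \<in> Sn w n x" using assms(1) by (auto simp: Sall_def)
  then obtain m where "n = Suc m" by (cases n) auto
  then have "q \<in> Sn w (Suc n) x" using n assms by (auto simp: S1_def)
  then show ?thesis unfolding Sall_def by force
qed

lemma S1_Sall: "q \<in> torus3 \<Longrightarrow> collides w x q \<Longrightarrow> q \<in> Sall w x"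
  unfolding Sall_def by (rule UN_I[of 1]) (auto simp: S1_def)

lemma disp_add_fracv: "disp w (p + fracv v) = disp w (p + v)"
  by (rule disp_per) (auto simp: fracv_def frac_def intro!: exI[where x="- floor (v$i)" for i])

lemma pair_exists:
  assumes x: "x \<in> torus3" and nc: "x \<notin> nocoll w"
  shows "\<exists>p q. p \<in> torus3 \<and> q \<in> torus3 \<and> p \<in> Sall w x \<and> q \<in> Sall w x \<and> EE w p q = 0"
proof -
  obtain y where y: "y \<in> torus3" "collides w x y" using x nc by (auto simp: nocoll_def)
  have yS: "y \<in> Sall w x" using S1_Sall y by blast
  have xS: "x \<in> Sall w x" using Sall_step[OF yS x collides_sym[OF y(2)]] .
  consider "disp w y = disp w x + disp w (y - x)" | "disp w x = disp w y + disp w (x - y)"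
    | "disp w (x + y) = disp w x + disp w y" using y(2) unfolding collides_alt by blast
  then show ?thesis
  proof cases
    case 1
    define z where "z = fracv (y - x)"
    have "EE w x z = 0" using 1 by (simp add: EE_def z_def disp_add_fracv disp_fracv)
    moreover have "z \<in> Sall w x" using Sall_step[OF xS _ EE_coll[OF calculation]] fracv_torus z_def by simp
    ultimately show ?thesis using x xS fracv_torus z_def by blast
  next
    case 2
    define z where "z = fracv (x - y)"
    have "EE w y z = 0" using 2 by (simp add: EE_def z_def disp_add_fracv disp_fracv)
    moreover have "z \<in> Sall w x" using Sall_step[OF yS _ EE_coll[OF calculation]] fracv_torus z_def by simp
    ultimately show ?thesis using y yS fracv_torus z_def by blast
  next
    case 3
    then have "EE w x y = 0" by (simp add: EE_def)
    then show ?thesis using x y xS yS by blast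
  qed
qed



definition sigc :: "(real^3) set \<Rightarrow> bool" where
  "sigc S \<longleftrightarrow> (\<exists>A. countable A \<and> (\<forall>K\<in>A. compact K) \<and> S = \<Union>A)"

lemma sigc_UN:
  assumes I: "countable I" and F: "\<And>i. i \<in> I \<Longrightarrow> sigc (F i)"
  shows "sigc (\<Union>i\<in>I. F i)"
proof -
  from F have "\<forall>i\<in>I. \<exists>A. countable A \<and> (\<forall>K\<in>A. compact K) \<and> F i = \<Union>A"
    by (auto simp: sigc_def)
  then obtain A where A: "\<And>i. i \<in> I \<Longrightarrow> countable (A i) \<and> (\<forall>K\<in>A i. compact K) \<and> F i = \<Union>(A i)"
    by metis
  show ?thesis unfolding sigc_def
    by (rule exI[of _ "\<Union>i\<in>I. A i"]) (use A I in auto)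
qed

lemma sigc_borel: "sigc S \<Longrightarrow> S \<in> sets borel"
proof -
  assume "sigc S"
  then obtain A where A: "countable A" "\<forall>K\<in>A. compact K" "S = \<Union>A" by (auto simp: sigc_def)
  have "A \<subseteq> sets borel" using A(2) by (auto intro: borel_closed compact_imp_closed)
  then show ?thesis using A(1,3) sets.countable_Union by metis
qed

definition colr :: "real \<Rightarrow> real^3 \<Rightarrow> real^3 \<Rightarrow> bool" where
  "colr w x y \<longleftrightarrow>
   disp w y = disp w x + disp w (y - x) \<or> disp w x = disp w y + disp w (x - y) \<or>
   disp w (x + y) = disp w x + disp w y"

lemma cont_disp: "continuous_on UNIV (\<lambda>z. disp w (f z))" if "continuous_on UNIV f" for f :: "'a::metric_space \<Rightarrow> real^3"
  unfolding disp_def by (auto intro!: continuous_intros that)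

lemma closed_colr: "closed {z::((real^3) \<times> (real^3)). colr w (fst z) (snd z)}"
proof -
  have c1: "continuous_on UNIV (\<lambda>z::((real^3) \<times> (real^3)). fst z)" "continuous_on UNIV (\<lambda>z::((real^3) \<times> (real^3)). snd z)"
    by (intro continuous_intros)+
  have "{z::((real^3) \<times> (real^3)). colr w (fst z) (snd z)} =
     {z. disp w (snd z) = disp w (fst z) + disp w (snd z - fst z)} \<union>
     {z. disp w (fst z) = disp w (snd z) + disp w (fst z - snd z)} \<union>
     {z. disp w (fst z + snd z) = disp w (fst z) + disp w (snd z)}"
    by (auto simp: colr_def)
  also have "closed \<dots>"
    by (intro closed_Un closed_Collect_eq continuous_intros cont_disp c1)
  finally show ?thesis .
qed

definition CC :: "nat \<Rightarrow> (real^3) set" where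
  "CC k = cbox 0 (\<chi> i. 1 - 1 / real (Suc (Suc k)))"

lemma torus3_CC: "torus3 = (\<Union>k. CC k)"
proof (intro equalityI subsetI)
  fix x assume x: "x \<in> torus3"
  have "\<exists>k. \<forall>i. x$i \<le> 1 - 1 / real (Suc (Suc k))"
  proof -
    define m where "m = Max (range (\<lambda>i. x$i))"
    have m: "x$i \<le> m" for i unfolding m_def by (rule Max_ge) auto
    have "m \<in> range (\<lambda>i. x$i)" unfolding m_def by (rule Max_in) auto
    then have "m < 1" using x by (auto simp: torus3_def)
    then obtain k where "inverse (real (Suc k)) < 1 - m" 
      using reals_Archimedean[of "1 - m"] by auto
    then have "1 / real (Suc k) < 1 - m" by (simp add: divide_inverse)
    then have "m \<le> 1 - 1 / real (Suc (Suc k))"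
      by (smt (verit) frac_less2 of_nat_Suc of_nat_le_iff less_Suc_eq_le divide_left_mono of_nat_0_less_iff zero_less_Suc)
    then show ?thesis using m by (meson order.trans)
  qed
  then obtain k where "\<forall>i. x$i \<le> 1 - 1 / real (Suc (Suc k))" by blast
  then show "x \<in> (\<Union>k. CC k)" using x
    by (auto simp: CC_def mem_box_cart torus3_def)
next
  fix x assume "x \<in> (\<Union>k. CC k)"
  then obtain k where "x \<in> CC k" by blast
  then have "\<forall>i. 0 \<le> x$i \<and> x$i \<le> 1 - 1 / real (Suc (Suc k))" by (auto simp: CC_def mem_box_cart)
  then show "x \<in> torus3" unfolding torus3_def
    by (smt (verit, del_insts) mem_Collect_eq of_nat_0_less_iff zero_less_Suc zero_less_divide_1_iff)
qed

lemma collides_colr: "collides w x y \<longleftrightarrow> colr w x y"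
  by (simp add: collides_alt colr_def)

lemma sigc_image:
  assumes K: "compact K"
  shows "sigc (\<Union>z\<in>K. S1 w z)"
proof -
  define T where "T k = snd ` ((K \<times> CC k) \<inter> {z. colr w (fst z) (snd z)})" for k
  have "compact (T k)" for k
    unfolding T_def
    by (intro compact_continuous_image continuous_intros compact_Int_closed compact_Times K closed_colr)
       (simp add: CC_def)
  moreover have "(\<Union>z\<in>K. S1 w z) = (\<Union>k. T k)"
    unfolding T_def S1_def collides_colr torus3_CC by force
  ultimately show ?thesis unfolding sigc_def
    by (intro exI[of _ "range T"]) auto
qed

lemma sigc_Sn: "sigc (Sn w (Suc n) x)"
proof (induction n)
  case 0
  have "Sn w (Suc 0) x = (\<Union>z\<in>{x}. S1 w z)" by simp
  then show ?case using sigc_image[of "{x}"] by simp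
next
  case (Suc n)
  then obtain A where A: "countable A" "\<forall>K\<in>A. compact K" "Sn w (Suc n) x = \<Union>A"
    by (auto simp: sigc_def)
  have "Sn w (Suc (Suc n)) x = (\<Union>K\<in>A. \<Union>z\<in>K. S1 w z)" using A(3) by auto
  also have "sigc \<dots>" using A by (intro sigc_UN sigc_image) auto
  finally show ?case .
qed

lemma Sall_meas: "Sall w x \<in> sets lebesgue"
proof -
  have "Sall w x = (\<Union>n. Sn w (Suc n) x)"
    unfolding Sall_def by (auto simp: Suc_le_eq) (metis Suc_pred')
  also have "sigc \<dots>" by (intro sigc_UN sigc_Sn) auto
  finally have "Sall w x \<in> sets borel" by (rule sigc_borel)
  moreover have "sets borel \<subseteq> sets lebesgue" by force
  ultimately show ?thesis by blast
qed



lemma sin3: "sin (3 * (x::real)) = 3 * sin x - 4 * (sin x)^3"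
proof -
  have "sin (3 * x) = sin (2 * x + x)" by simp
  also have "\<dots> = 2 * sin x * cos x * cos x + (1 - 2 * (sin x)^2) * sin x"
    by (simp only: sin_add sin_double cos_double_sin)
  also have "\<dots> = 2 * sin x * (cos x)^2 + (1 - 2 * (sin x)^2) * sin x"
    by (simp add: power2_eq_square)
  also have "\<dots> = 2 * sin x * (1 - (sin x)^2) + (1 - 2 * (sin x)^2) * sin x"
    by (simp add: cos_squared_eq)
  also have "\<dots> = 3 * sin x - 4 * (sin x)^3"
    by (simp add: power2_eq_square power3_eq_cube algebra_simps)
  finally show ?thesis .
qed

lemma sin_pos01: "0 \<le> s \<Longrightarrow> s < 1 \<Longrightarrow> 0 \<le> sin (pi * s)"
  by (rule sin_ge_zero) auto

lemma coord_deg: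
  assumes s: "0 \<le> s" "s < 1" and t: "0 \<le> t" "t < 1"
    and e1: "dc s t = psi s" and e2: "dc s t = psi t"
  shows "psi s = 0 \<or> psi s = 1/2"
proof (cases "sin (pi * s) = 0 \<or> sin (pi * t) = 0")
  case True
  then show ?thesis
  proof
    assume "sin (pi * s) = 0" then show ?thesis by (simp add: psi_alt)
  next
    assume "sin (pi * t) = 0" then show ?thesis using e1 e2 by (simp add: psi_alt)
  qed
next
  case False
  have ps: "0 < sin (pi * s)" using sin_pos01[OF s] False by linarith
  have pt: "0 < sin (pi * t)" using sin_pos01[OF t] False by linarith
  have "sin (pi * s) * sin (2 * pi * t + pi * s) = sin (pi * s) * 1"
    using e1 by (simp add: dc_alt psi_def)
  then have X: "sin (2 * pi * t + pi * s) = 1" using ps by simp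
  have "sin (pi * t) * sin (2 * pi * s + pi * t) = sin (pi * t) * 1"
    using e2 by (simp add: dc_alt[of t s, folded dc_sym[of s t]] psi_def)
  then have Y: "sin (2 * pi * s + pi * t) = 1" using pt by simp
  have cX: "cos (2 * pi * t + pi * s) = 0" using X sin_cos_squared_add[of "2 * pi * t + pi * s"] by simp
  have cY: "cos (2 * pi * s + pi * t) = 0" using Y sin_cos_squared_add[of "2 * pi * s + pi * t"] by simp
  have "cos ((2 * pi * s + pi * t) - (2 * pi * t + pi * s)) = 1"
    by (simp only: cos_diff X Y cX cY)
  moreover have "(2 * pi * s + pi * t) - (2 * pi * t + pi * s) = (s - t) * pi" by (simp add: algebra_simps)
  ultimately have "cos ((s - t) * pi) = 1" by simp
  then obtain n :: int where n: "(s - t) * pi = n * 2 * pi" by (auto simp: cos_one_2pi_int)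
  then have "(s - t - 2 * n) * pi = 0" by (simp add: algebra_simps)
  then have "s - t = 2 * n" by simp
  then have "- 1 < 2 * real_of_int n" "2 * real_of_int n < 1" using s t by linarith+
  then have "n < 1" "-1 < n" by linarith+
  then have "n = 0" by simp
  then have st: "s = t" using \<open>s - t = 2 * n\<close> by simp
  have "sin (3 * (pi * s)) = 1" using X st by (simp add: algebra_simps)
  then have "3 * sin (pi * s) - 4 * (sin (pi * s))^3 = 1" by (simp add: sin3)
  then have "(sin (pi * s) + 1) * (2 * sin (pi * s) - 1)^2 = 0"
    by (simp add: power2_eq_square power3_eq_cube algebra_simps)
  then have h: "sin (pi * s) = 1/2" using ps by simp
  show ?thesis unfolding psi_alt h by (simp add: power2_eq_square)
qed

definition NN :: "real^3 \<Rightarrow> real" where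
  "NN p = psi (p$1) + psi (p$2) + psi (p$3)"

lemma EE_dc: "EE w p q = - w + 2 * (dc (p$1) (q$1) + dc (p$2) (q$2) + dc (p$3) (q$3))"
  unfolding EE_def by (rule disp_E)

lemma torus_coord: "p \<in> torus3 \<Longrightarrow> 0 \<le> p$i \<and> p$i < 1"
  by (auto simp: torus3_def)

lemma nondeg:
  assumes w: "2 < w" "w < 3" and p: "p \<in> torus3" and q: "q \<in> torus3" and E: "EE w p q = 0"
  shows "NN p > w/2 \<or> NN q > w/2"
proof (rule ccontr)
  assume "\<not> ?thesis"
  then have np: "NN p \<le> w/2" and nq: "NN q \<le> w/2" by auto
  have sum: "dc (p$1) (q$1) + dc (p$2) (q$2) + dc (p$3) (q$3) = w/2" using E by (simp add: EE_dc)
  have le1: "dc (p$i) (q$i) \<le> psi (p$i)" for i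
    by (rule dc_le_psi) (use torus_coord[OF p] sin_pos01 in blast)
  have le2: "dc (p$i) (q$i) \<le> psi (q$i)" for i
    by (subst dc_sym, rule dc_le_psi) (use torus_coord[OF q] sin_pos01 in blast)
  have eq1: "dc (p$i) (q$i) = psi (p$i)" if "i \<in> {1,2,3}" for i
    using le1[of 1] le1[of 2] le1[of 3] sum np that unfolding NN_def by auto
  have eq2: "dc (p$i) (q$i) = psi (q$i)" if "i \<in> {1,2,3}" for i
    using le2[of 1] le2[of 2] le2[of 3] sum nq that unfolding NN_def by auto
  have v: "psi (p$i) = 0 \<or> psi (p$i) = 1/2" if "i \<in> {1,2,3}" for i
    using coord_deg[OF _ _ _ _ eq1[OF that] eq2[OF that]] torus_coord[OF p] torus_coord[OF q] by blast
  have "NN p = w/2" using eq1[of 1] eq1[of 2] eq1[of 3] sum unfolding NN_def by simp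
  then have nn: "psi (p$1) + psi (p$2) + psi (p$3) = w/2" unfolding NN_def .
  have a: "psi (p$1) = 0 \<or> psi (p$1) = 1/2" using v[of 1] by simp
  have b: "psi (p$2) = 0 \<or> psi (p$2) = 1/2" using v[of 2] by simp
  have c: "psi (p$3) = 0 \<or> psi (p$3) = 1/2" using v[of 3] by simp
  from a b c nn w show False by (elim disjE) linarith+
qed




lemma sin_lip: "\<bar>sin a - sin b\<bar> \<le> \<bar>a - (b::real)\<bar>"
proof -
  have "\<bar>sin a - sin b\<bar> = 2 * \<bar>sin ((a - b) / 2)\<bar> * \<bar>cos ((a + b) / 2)\<bar>"
    by (simp add: sin_diff_sin abs_mult)
  also have "\<dots> \<le> 2 * \<bar>(a - b) / 2\<bar> * 1"
    by (intro mult_mono abs_sin_x_le_abs_x abs_cos_le_one) auto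
  finally show ?thesis by simp
qed

lemma EE_fracv_right: "EE w p (fracv v) = EE w p v"
  by (simp add: EE_def disp_add_fracv disp_fracv)

lemma EE_fracv_left: "EE w (fracv v) z = EE w v z"
  using disp_add_fracv[of w z v] by (simp add: EE_def disp_fracv add.commute)

lemma sin_pi_nz: "x \<notin> \<int> \<Longrightarrow> sin (pi * x) \<noteq> 0"
proof
  assume "x \<notin> \<int>" "sin (pi * x) = 0"
  then obtain i :: int where "pi * x = of_int i * pi" by (auto simp: sin_zero_iff_int2)
  then have "x = of_int i" by simp
  then show False using \<open>x \<notin> \<int>\<close> by simp
qed

lemma countable_shift: "countable {t::real. c - t \<in> \<int>}"
proof -
  have "{t::real. c - t \<in> \<int>} \<subseteq> (\<lambda>n::int. c - of_int n) ` UNIV"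
  proof
    fix t assume "t \<in> {t::real. c - t \<in> \<int>}"
    then obtain n where "c - t = of_int n" by (auto elim!: Ints_cases)
    then have "t = c - of_int n" by simp
    then show "t \<in> (\<lambda>n::int. c - of_int n) ` UNIV" by blast
  qed
  then show ?thesis by (rule countable_subset) simp
qed

lemma countable_Ints: "countable (\<int> :: real set)"
  unfolding Ints_def by simp

lemma cont_disp_on: "continuous_on S (\<lambda>z. disp w (f z))" if "continuous_on S f" for f :: "real \<Rightarrow> real^3"
  unfolding disp_def by (intro continuous_intros that)

lemma psi_def': "psi s = (cos (2 * pi * s) - 1) + 2 * sin (pi * s)"
  by (simp add: psi_def)

lemma open_part:
  assumes w: "2 < w" "w < 3" and P: "P \<in> torus3" and N: "NN P > w/2"
  shows "\<exists>U. open U \<and> U \<noteq> {} \<and> (\<forall>z\<in>U. z \<in> torus3 \<and> (\<exists>q\<in>torus3. collides w P q \<and> collides w q z))"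
proof -
  define a where "a = w/2"
  define P1 where "P1 = P$1"
  define P2 where "P2 = P$2"
  define P3 where "P3 = P$3"
  have Pc: "0 \<le> P1" "P1 < 1" "0 \<le> P2" "P2 < 1" "0 \<le> P3" "P3 < 1"
    using torus_coord[OF P] by (auto simp: P1_def P2_def P3_def)
  have NN': "psi P1 + psi P2 + psi P3 > a" using N by (simp add: NN_def a_def P1_def P2_def P3_def)
  have a1: "a > 1" using w by (simp add: a_def)
  have ps1: "psi P1 > 0" using NN' psi_le[of P2] psi_le[of P3] a1 by linarith
  have ps2: "psi P2 > 0" using NN' psi_le[of P1] psi_le[of P3] a1 by linarith
  have ps3: "psi P3 > 0" using NN' psi_le[of P2] psi_le[of P1] a1 by linarith
  have sp: "sin (pi * x) > 0" if "psi x > 0" "0 \<le> x" "x < 1" for x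
  proof -
    have "sin (pi * x) \<noteq> 0" using that(1) by (auto simp: psi_alt)
    then show ?thesis using sin_pos01[OF that(2,3)] by linarith
  qed
  have s1: "sin (pi * P1) > 0" using sp ps1 Pc by blast
  have s2: "sin (pi * P2) > 0" using sp ps2 Pc by blast
  have s3: "sin (pi * P3) > 0" using sp ps3 Pc by blast
  have P2p: "P2 > 0" using s2 Pc by (cases "P2 = 0") auto
  have P3p: "P3 > 0" using s3 Pc by (cases "P3 = 0") auto
  define R1 where "R1 = 2 * sin (pi * P1)"
  define R2 where "R2 = 2 * sin (pi * P2)"
  define R3 where "R3 = 2 * sin (pi * P3)"
  define c1 where "c1 = cos (2 * pi * P1) - 1"
  define c2 where "c2 = cos (2 * pi * P2) - 1"
  define c3 where "c3 = cos (2 * pi * P3) - 1"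
  have R1p: "R1 > 0" and R2p: "R2 > 0" and R3p: "R3 > 0" using s1 s2 s3 by (auto simp: R1_def R2_def R3_def)
  have c1n: "c1 \<le> 0" and c2n: "c2 \<le> 0" and c3n: "c3 \<le> 0" by (auto simp: c1_def c2_def c3_def)
  define b where "b = a - (c1 + c2 + c3)"
  define R where "R = R1 + R2 + R3"
  define lam where "lam = b / R"
  have Rb: "b < R" using NN' by (simp add: psi_def' b_def R_def R1_def R2_def R3_def c1_def c2_def c3_def)
  have bp: "b > 0" using a1 c1n c2n c3n by (simp add: b_def)
  have Rp: "R > 0" using R1p R2p R3p by (simp add: R_def)
  have lam0: "0 < lam" and lam1: "lam < 1" using Rb bp Rp by (auto simp: lam_def)
  have lamR: "lam * R = b" using Rp by (simp add: lam_def)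
  define sig1 where "sig1 y = sin (2 * pi * y + pi * P1)" for y
  define sig2 where "sig2 y = lam - (sig1 y - lam) * R1 / R2" for y
  define q2 where "q2 y = (arcsin (sig2 y) - pi * P2) / (2 * pi)" for y
  define q3 where "q3 = (arcsin lam - pi * P3) / (2 * pi)"
  define qv where "qv y = (vector [y, q2 y, q3] :: real^3)" for y
  have sumeq: "dc P1 y + dc P2 (q2 y) + dc P3 q3 = a" if "\<bar>sig2 y\<bar> \<le> 1" for y
  proof -
    have e2: "2 * pi * q2 y + pi * P2 = arcsin (sig2 y)" by (simp add: q2_def)
    have e3: "2 * pi * q3 + pi * P3 = arcsin lam" by (simp add: q3_def)
    have f2: "sin (2 * pi * q2 y + pi * P2) = sig2 y" using that by (simp add: e2 abs_le_iff)
    have f3: "sin (2 * pi * q3 + pi * P3) = lam" using lam0 lam1 by (simp add: e3)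
    have "dc P1 y + dc P2 (q2 y) + dc P3 q3
        = c1 + R1 * sig1 y + (c2 + R2 * sig2 y) + (c3 + R3 * lam)"
      unfolding dc_alt f2 f3 by (simp add: c1_def c2_def c3_def R1_def R2_def R3_def sig1_def)
    also have "\<dots> = (c1 + c2 + c3) + lam * R"
      using R2p by (simp add: sig2_def R_def field_simps)
    also have "\<dots> = a" by (simp add: lamR b_def)
    finally show ?thesis .
  qed
  have EEq: "EE w P (qv y) = 0" if "\<bar>sig2 y\<bar> \<le> 1" for y
    using sumeq[OF that] by (simp add: EE_dc qv_def P1_def P2_def P3_def a_def)
  define ys where "ys = (arcsin lam - pi * P1) / (2 * pi)"
  have sig1ys: "sig1 ys = lam" using lam0 lam1 by (simp add: sig1_def ys_def)
  define del where "del = (1 - lam) * R2 / (4 * pi * R1)"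
  have delp: "del > 0" using lam1 R1p R2p by (simp add: del_def)
  have sig2b: "\<bar>sig2 y\<bar> \<le> 1" if "\<bar>y - ys\<bar> < del" for y
  proof -
    have "\<bar>sig1 y - sig1 ys\<bar> \<le> \<bar>(2 * pi * y + pi * P1) - (2 * pi * ys + pi * P1)\<bar>"
      unfolding sig1_def by (rule sin_lip)
    also have "\<dots> = 2 * pi * \<bar>y - ys\<bar>"
    proof -
      have "(2 * pi * y + pi * P1) - (2 * pi * ys + pi * P1) = (2 * pi) * (y - ys)" by (simp add: algebra_simps)
      then show ?thesis by (simp add: abs_mult)
    qed
    also have "\<dots> \<le> 2 * pi * del" using that by simp
    finally have h: "\<bar>sig1 y - lam\<bar> \<le> 2 * pi * del" using sig1ys by simp
    have "\<bar>sig2 y - lam\<bar> = \<bar>sig1 y - lam\<bar> * R1 / R2"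
      using R1p R2p by (simp add: sig2_def abs_mult abs_divide)
    also have "\<dots> \<le> 2 * pi * del * R1 / R2"
      using h R1p R2p by (simp add: divide_right_mono mult_right_mono)
    also have "\<dots> = (1 - lam) / 2" using R1p R2p by (simp add: del_def field_simps)
    finally have h2: "\<bar>sig2 y - lam\<bar> \<le> (1 - lam) / 2" .
    have v1: "sig2 y - lam \<le> (1 - lam) / 2" using abs_le_D1[OF h2] .
    have v2: "- (sig2 y - lam) \<le> (1 - lam) / 2" using abs_le_D2[OF h2] .
    have u1: "sig2 y \<le> 1" using v1 lam0 lam1 by (simp add: field_simps)
    have u2: "- sig2 y \<le> 1" using v2 lam0 lam1 by (simp add: field_simps)
    show ?thesis using u1 u2 by (simp add: abs_le_iff)
  qed
  define Bad where "Bad = \<int> \<union> {t::real. (1/2 - P1) - t \<in> \<int>} \<union> {t::real. (1/2 - 2 * P1) - t \<in> \<int>}"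
  have cB: "countable Bad" unfolding Bad_def
    using countable_Ints countable_shift by blast
  have "uncountable {ys - del/2 <..< ys + del/2}" using delp by (simp add: uncountable_open_interval)
  then obtain y0 where y0: "y0 \<in> {ys - del/2 <..< ys + del/2}" "y0 \<notin> Bad"
    using cB by (metis countable_subset subsetI)
  have y0Z: "y0 \<notin> \<int>" and y0Z2: "(1/2 - P1) - y0 \<notin> \<int>" and y0Z3: "(1/2 - 2 * P1) - y0 \<notin> \<int>"
    using y0(2) by (auto simp: Bad_def)
  have y0d: "\<bar>y0 - ys\<bar> < del/2" unfolding abs_diff_less_iff using y0(1) by auto
  define sy where "sy = \<bar>sin (pi * y0)\<bar>"
  have syp: "sy > 0" using sin_pi_nz[OF y0Z] by (simp add: sy_def)
  have sy1: "sy \<le> 1" by (simp add: sy_def abs_sin_le_one)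
  define eta where "eta = min (del/2) (sy / (2 * pi))"
  have etap: "eta > 0" using delp syp by (simp add: eta_def)
  have eta1: "eta < 1"
  proof -
    have "sy / (2 * pi) \<le> 1 / (2 * pi)" using sy1 by (simp add: divide_right_mono)
    also have "\<dots> < 1" using pi_gt3 by (simp add: field_simps)
    finally have "sy / (2 * pi) < 1" .
    then show ?thesis unfolding eta_def by (meson min.cobounded2 le_less_trans)
  qed
  have etad: "eta \<le> del/2" by (simp add: eta_def)
  have etasy: "pi * eta \<le> sy / 2" using pi_gt_zero by (simp add: eta_def min_def field_simps)
  define k where "k = - floor ((1/2 - P1) - y0)"
  define w01 where "w01 = frac ((1/2 - P1) - y0)"
  have w01k: "w01 = (1/2 - P1) - y0 + of_int k" by (simp add: w01_def k_def frac_def)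
  have w01p: "0 < w01" and w011: "w01 < 1"
    using y0Z2 frac_ge_0[of "(1/2 - P1) - y0"] frac_lt_1[of "(1/2 - P1) - y0"]
    by (auto simp: w01_def order_le_less)
  define w0 where "w0 = (vector [w01, P2, P3] :: real^3)"
  define lo where "lo = y0 - eta"
  define hi where "hi = y0 + eta"
  have inrange: "\<bar>sig2 y\<bar> \<le> 1" if "lo \<le> y" "y \<le> hi" for y
  proof (rule sig2b)
    have h1: "y0 - eta \<le> y" "y \<le> y0 + eta" using that by (auto simp: lo_def hi_def)
    have h2: "2 * (y0 - ys) < del" "2 * (ys - y0) < del" using y0(1) by (auto simp: field_simps)
    have h3: "2 * eta \<le> del" using etad by (simp add: field_simps)
    have "y - ys < del" using h1 h2 h3 by argo
    moreover have "ys - y < del" using h1 h2 h3 by argo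
    ultimately show "\<bar>y - ys\<bar> < del" by (simp add: abs_less_iff)
  qed
  have kk: "w01 + P1 + y0 = 1/2 + of_int k" using w01k by simp
  define A where "A = sin (pi * (w01 - P1))"
  have Anz: "A \<noteq> 0"
  proof -
    have "w01 - P1 \<notin> \<int>"
    proof
      assume "w01 - P1 \<in> \<int>"
      then have "(w01 - P1) - of_int k \<in> \<int>" by simp
      moreover have "(w01 - P1) - of_int k = (1/2 - 2 * P1) - y0" using w01k by simp
      ultimately show False using y0Z3 by simp
    qed
    then show ?thesis unfolding A_def by (rule sin_pi_nz)
  qed
  define G where "G y z = EE w (qv y) z" for y z
  have Gw0: "G y w0 = 8 * sin (pi * y) * A * cos (pi * (w01 + P1 + y))" if "lo \<le> y" "y \<le> hi" for y
  proof -
    have se: "dc P1 y + dc P2 (q2 y) + dc P3 q3 = a" using sumeq[OF inrange[OF that]] .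
    have "G y w0 = - w + 2 * (dc y w01 + dc (q2 y) P2 + dc q3 P3)"
      by (simp add: G_def EE_dc qv_def w0_def)
    also have "\<dots> = 2 * (dc y w01 - dc y P1)"
      using se by (simp add: dc_sym[of y P1] dc_sym[of "q2 y" P2] dc_sym[of q3 P3] a_def algebra_simps)
    also have "dc y w01 - dc y P1 = 2 * sin (pi * y) * (sin (2 * pi * w01 + pi * y) - sin (2 * pi * P1 + pi * y))"
      by (simp add: dc_alt algebra_simps)
    also have "sin (2 * pi * w01 + pi * y) - sin (2 * pi * P1 + pi * y)
        = 2 * sin (((2 * pi * w01 + pi * y) - (2 * pi * P1 + pi * y)) / 2) * cos (((2 * pi * w01 + pi * y) + (2 * pi * P1 + pi * y)) / 2)"
      by (rule sin_diff_sin)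
    also have "((2 * pi * w01 + pi * y) - (2 * pi * P1 + pi * y)) / 2 = pi * (w01 - P1)"
      by (simp add: field_simps)
    also have "((2 * pi * w01 + pi * y) + (2 * pi * P1 + pi * y)) / 2 = pi * (w01 + P1 + y)"
      by (simp add: field_simps)
    finally show ?thesis by (simp add: A_def algebra_simps)
  qed
  have lohi: "lo \<le> hi" using etap by (simp add: lo_def hi_def)
  have prod_neg: "G lo w0 * G hi w0 < 0"
  proof -
    define X where "X = pi * (1/2 + of_int k)"
    define Y where "Y = pi * eta"
    have chi: "pi * (w01 + P1 + hi) = X + Y" unfolding hi_def X_def Y_def using kk by (simp add: algebra_simps)
    have clo: "pi * (w01 + P1 + lo) = X - Y" unfolding lo_def X_def Y_def using kk by (simp add: algebra_simps)
    have c2X: "cos (2 * X) = -1"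
    proof -
      have e: "2 * X = pi + (2 * pi) * of_int k" by (simp add: X_def algebra_simps)
      have "cos (pi + (2 * pi) * of_int k) = cos pi * cos ((2 * pi) * of_int k) - sin pi * sin ((2 * pi) * of_int k)"
        by (rule cos_add)
      then show ?thesis unfolding e by simp
    qed
    have cc: "cos (X - Y) * cos (X + Y) = - ((sin Y)^2)"
    proof -
      have "cos (X - Y) * cos (X + Y) = (cos ((X - Y) - (X + Y)) + cos ((X - Y) + (X + Y))) / 2"
        by (rule cos_times_cos)
      also have "(X - Y) - (X + Y) = - (2 * Y)" by simp
      also have "(X - Y) + (X + Y) = 2 * X" by simp
      finally have h: "cos (X - Y) * cos (X + Y) = (cos (- (2 * Y)) + cos (2 * X)) / 2" .
      have "cos (- (2 * Y)) = 1 - 2 * (sin Y)^2" by (simp only: cos_minus cos_double_sin)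
      then show ?thesis unfolding h c2X by simp
    qed
    have ss: "sin (pi * lo) * sin (pi * hi) = sy^2 - (sin Y)^2"
    proof -
      have "sin (pi * lo) * sin (pi * hi) = (cos (pi * lo - pi * hi) - cos (pi * lo + pi * hi)) / 2"
        by (rule sin_times_sin)
      also have "pi * lo - pi * hi = - (2 * Y)" by (simp add: lo_def hi_def Y_def algebra_simps)
      also have "pi * lo + pi * hi = 2 * (pi * y0)" by (simp add: lo_def hi_def algebra_simps)
      finally have h: "sin (pi * lo) * sin (pi * hi) = (cos (- (2 * Y)) - cos (2 * (pi * y0))) / 2" .
      have h1: "cos (- (2 * Y)) = 1 - 2 * (sin Y)^2" by (simp only: cos_minus cos_double_sin)
      have h2: "cos (2 * (pi * y0)) = 1 - 2 * sy^2" by (simp only: cos_double_sin sy_def power2_abs)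
      show ?thesis unfolding h h1 h2 by simp
    qed
    have sY: "0 < sin Y" unfolding Y_def using etap eta1 by (intro sin_gt_zero) auto
    have sYle: "sin Y \<le> Y" using abs_sin_x_le_abs_x[of Y] etap by (simp add: Y_def)
    have "Y \<le> sy / 2" using etasy by (simp add: Y_def)
    then have "sin Y < sy" using sYle syp by argo
    then have "(sin Y)^2 < sy^2" by (rule power_strict_mono) (use sY in auto)
    then have p1: "sy^2 - (sin Y)^2 > 0" by simp
    have p2: "A^2 > 0" using Anz by simp
    have p3: "(sin Y)^2 > 0" using sY by simp
    have "G lo w0 * G hi w0 = 64 * (sin (pi * lo) * sin (pi * hi)) * A^2 * (cos (pi * (w01 + P1 + lo)) * cos (pi * (w01 + P1 + hi)))"
    proof -
      have g1: "G lo w0 = 8 * sin (pi * lo) * A * cos (pi * (w01 + P1 + lo))" using Gw0 lohi by simp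
      have g2: "G hi w0 = 8 * sin (pi * hi) * A * cos (pi * (w01 + P1 + hi))" using Gw0 lohi by simp
      show ?thesis unfolding g1 g2 power2_eq_square by algebra
    qed
    also have "\<dots> = - (64 * (sy^2 - (sin Y)^2) * A^2 * (sin Y)^2)"
      unfolding ss chi clo cc by simp
    also have "\<dots> < 0" using p1 p2 p3 by simp
    finally show ?thesis .
  qed
  have qv_eq: "qv = (\<lambda>y. y *\<^sub>R axis 1 1 + q2 y *\<^sub>R axis 2 1 + q3 *\<^sub>R axis 3 1)"
    by (rule ext) (simp add: qv_def vec_eq_iff axis_def forall_3)
  have csig2: "continuous_on {lo..hi} sig2"
    unfolding sig2_def sig1_def by (intro continuous_intros) (use R2p in auto)
  have cq2: "continuous_on {lo..hi} q2"
    unfolding q2_def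
    by (intro continuous_intros csig2) (use inrange in \<open>auto simp: abs_le_iff\<close>)
  have cqv: "continuous_on {lo..hi} qv"
    unfolding qv_eq by (intro continuous_intros cq2)
  have cG: "continuous_on {lo..hi} (\<lambda>y. G y z)" for z
    unfolding G_def EE_def by (intro continuous_intros cont_disp_on cqv)
  have cGz: "continuous_on UNIV (\<lambda>z. G y z)" for y
    unfolding G_def EE_def by (intro continuous_intros cont_disp)
  define U where "U = box 0 (\<chi> i. 1) \<inter> {z. G lo z * G hi z < 0}"
  have oU: "open U" unfolding U_def
    by (intro open_Int open_box open_Collect_less continuous_intros cGz)
  have w0U: "w0 \<in> U" unfolding U_def
    using prod_neg w01p w011 P2p P3p Pc by (simp add: mem_box_cart forall_3 w0_def)
  have main: "z \<in> torus3 \<and> (\<exists>q\<in>torus3. collides w P q \<and> collides w q z)" if zU: "z \<in> U" for z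
  proof
    have zb: "\<forall>i. 0 < z$i \<and> z$i < 1" using zU by (simp add: U_def mem_box_cart)
    then show "z \<in> torus3" by (auto simp: torus3_def less_imp_le)
    have pn: "G lo z * G hi z < 0" using zU by (simp add: U_def)
    have "\<exists>y. lo \<le> y \<and> y \<le> hi \<and> G y z = 0"
    proof (cases "G lo z < 0")
      case True
      then have "G hi z > 0" using pn by (simp add: mult_less_0_iff)
      then show ?thesis using IVT'[of "\<lambda>y. G y z" lo 0 hi] True lohi cG[of z] by auto
    next
      case False
      then have "G lo z > 0" "G hi z < 0" using pn by (auto simp: mult_less_0_iff)
      then show ?thesis using IVT2'[of "\<lambda>y. G y z" hi 0 lo] lohi cG[of z] by auto
    qed
    then obtain y where y: "lo \<le> y" "y \<le> hi" "G y z = 0" by blast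
    define qq where "qq = fracv (qv y)"
    have "EE w P qq = 0" unfolding qq_def EE_fracv_right using EEq[OF inrange[OF y(1,2)]] .
    then have c1: "collides w P qq" by (rule EE_coll)
    have "EE w qq z = 0" unfolding qq_def EE_fracv_left using y(3) by (simp add: G_def)
    then have c2: "collides w qq z" by (rule EE_coll)
    show "\<exists>q\<in>torus3. collides w P q \<and> collides w q z"
      using c1 c2 fracv_torus qq_def by blast
  qed
  show ?thesis using oU w0U main by blast
qed



theorem mainTheorem6:
  fixes \<omega>0 :: real and x :: "real^3"
  assumes "2 < \<omega>0" and "\<omega>0 < 3"
    and "x \<in> torus3" and "x \<notin> nocoll \<omega>0"
  shows "Sall \<omega>0 x \<in> sets lebesgue \<and> emeasure lebesgue (Sall \<omega>0 x) > 0"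
proof
  show meas: "Sall \<omega>0 x \<in> sets lebesgue" by (rule Sall_meas)
  obtain p q where pq: "p \<in> torus3" "q \<in> torus3" "p \<in> Sall \<omega>0 x" "q \<in> Sall \<omega>0 x" "EE \<omega>0 p q = 0"
    using pair_exists[OF assms(3,4)] by blast
  have "\<exists>P. P \<in> torus3 \<and> P \<in> Sall \<omega>0 x \<and> NN P > \<omega>0/2"
    using nondeg[OF assms(1,2) pq(1,2,5)] pq by blast
  then obtain P where P: "P \<in> torus3" "P \<in> Sall \<omega>0 x" "NN P > \<omega>0/2" by blast
  obtain U where U: "open U" "U \<noteq> {}"
    "\<And>z. z \<in> U \<Longrightarrow> z \<in> torus3 \<and> (\<exists>q\<in>torus3. collides \<omega>0 P q \<and> collides \<omega>0 q z)"
    using open_part[OF assms(1,2) P(1,3)] by blast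
  have sub: "U \<subseteq> Sall \<omega>0 x"
  proof
    fix z assume "z \<in> U"
    then obtain r where r: "z \<in> torus3" "r \<in> torus3" "collides \<omega>0 P r" "collides \<omega>0 r z"
      using U(3) by blast
    have "r \<in> Sall \<omega>0 x" using Sall_step[OF P(2) r(2,3)] .
    then show "z \<in> Sall \<omega>0 x" using Sall_step r by blast
  qed
  obtain z0 where z0: "z0 \<in> U" using U(2) by blast
  obtain e where e: "0 < e" "ball z0 e \<subseteq> U" using openE[OF U(1) z0] by blast
  obtain a b where box: "z0 \<in> box a b" "box a b \<subseteq> ball z0 e"
    using rational_boxes[OF e(1)] by metis
  have "0 < emeasure lebesgue (box a b)"
    using box by (auto simp: emeasure_lborel_box_eq mem_box algebra_simps intro!: prod_pos)
  also have "\<dots> \<le> emeasure lebesgue (Sall \<omega>0 x)"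
    using box e sub meas by (intro emeasure_mono) auto
  finally show "emeasure lebesgue (Sall \<omega>0 x) > 0" .
qed



end
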